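(* Let $m\geq 2$ and let $f=a_0+a_1z+\cdots+a_mz^m\in\mathbb{Z}[z]$ be a primitive polynomial with $a_0a_m\neq 0$ such that $$|a_{m-1}|>1+|a_0||a_m|^{m-1}+|a_1||a_m|^{m-2}+\cdots+|a_{m-2}||a_m|.$$ Then $f$ is irreducible in $\mathbb{Z}[z]$.
   Context: A polynomial in $\mathbb{Z}[z]$ is primitive if the greatest common divisor of its coefficients is $1$. *)

theory Defs
  imports "HOL-Computational_Algebra.Computational_Algebra"
begin

end

theory Submission
  imports Defs "HOL-Complex_Analysis.Complex_Analysis"
begin

hide_const (open) Henstock_Kurzweil_Integration.content


lemma map_poly_of_int_mult:
  "map_poly (of_int :: int \<Rightarrow> complex) (p * q) = map_poly of_int p * map_poly of_int q"
  by (rule poly_eqI) (simp add: coeff_mult coeff_map_poly)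

lemma zorder_poly:
  fixes P :: "complex poly"
  assumes "P \<noteq> 0"
  shows "zorder (poly P) z = int (order z P)"
proof -
  obtain q where q: "P = [:-z,1:] ^ order z P * q" "\<not> [:-z,1:] dvd q"
    using order_decomp[OF assms] by blast
  have "poly q z \<noteq> 0" using q(2) by (simp add: poly_eq_0_iff_dvd)
  show ?thesis
  proof (rule zorder_eqI[where S=UNIV and g="poly q"])
    show "poly q holomorphic_on UNIV" by (intro holomorphic_intros)
    show "poly q z \<noteq> 0" by fact
    fix w show "poly P w = poly q w * (w - z) powi int (order z P)"
      by (subst q(1)) (simp add: power_int_of_nat poly_power mult.commute)
  qed auto
qed

lemma zorder_monom:
  fixes c :: complex
  assumes "c \<noteq> 0"
  shows "zorder (\<lambda>z. c * z ^ n) 0 = int n"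
proof (rule zorder_eqI[where S=UNIV and g="\<lambda>_. c"])
  fix w show "c * w ^ n = c * (w - 0) powi int n" by (simp add: power_int_of_nat)
qed (use assms in auto)

lemma count_inside:
  fixes P :: "complex poly" and c :: complex and r :: real
  assumes "P \<noteq> 0" "c \<noteq> 0" "r > 0"
    and less: "\<And>z. norm z = r \<Longrightarrow> norm (poly P z - c * z ^ n) < norm (c * z ^ n)"
  shows "(\<Sum>p\<in>{p. poly P p = 0 \<and> norm p < r}. order p P) = n"
proof -
  define F where "F = (\<lambda>z. c * z ^ n)"
  define G where "G = (\<lambda>z. poly P z - F z)"
  have fg: "(\<lambda>p. F p + G p) = poly P" by (auto simp: F_def G_def)
  have Z: "{p \<in> UNIV. poly P p = 0} = {p. poly P p = 0}" by auto
  have finZ: "finite {p. poly P p = 0}" using poly_roots_finite[OF assms(1)] .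
  have ZF: "{p \<in> UNIV. F p = 0} = (if n = 0 then {} else {0})"
    using assms(2) by (auto simp: F_def)
  have R: "(\<Sum>p\<in>{p \<in> UNIV. poly P p = 0}. winding_number (circlepath 0 r) p * of_int (zorder (poly P) p))
       = (\<Sum>p\<in>{p \<in> UNIV. F p = 0}. winding_number (circlepath 0 r) p * of_int (zorder F p))"
  proof -
    have fin1: "finite {p \<in> UNIV. F p + G p = 0}" using finZ by (simp add: F_def G_def)
    have "(\<Sum>p\<in>{p \<in> UNIV. F p + G p = 0}. winding_number (circlepath 0 r) p * of_int (zorder (poly P) p))
       = (\<Sum>p\<in>{p \<in> UNIV. F p = 0}. winding_number (circlepath 0 r) p * of_int (zorder F p))"
      apply (rule Rouche_theorem[of UNIV F G "circlepath 0 r", unfolded fg])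
      using fin1 ZF assms less
      by (auto simp: F_def G_def intro!: holomorphic_intros)
    moreover have "{p \<in> UNIV. F p + G p = 0} = {p \<in> UNIV. poly P p = 0}" by (simp add: F_def G_def)
    ultimately show ?thesis by simp
  qed
  have onc: "norm p \<noteq> r" if "poly P p = 0" for p
    using less[of p] that by auto
  have "(\<Sum>p\<in>{p \<in> UNIV. poly P p = 0}. winding_number (circlepath 0 r) p * of_int (zorder (poly P) p))
      = (\<Sum>p\<in>{p. poly P p = 0}. if norm p < r then of_nat (order p P) else 0)"
  proof (rule sum.cong)
    fix p assume p: "p \<in> {p. poly P p = 0}"
    show "winding_number (circlepath 0 r) p * of_int (zorder (poly P) p)
          = (if norm p < r then of_nat (order p P) else 0)"
    proof (cases "norm p < r")
      case True
      then show ?thesis using winding_number_circlepath[of p 0 r]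
        by (simp add: zorder_poly[OF assms(1)])
    next
      case False
      then have "norm p > r" using onc p by force
      then have "winding_number (circlepath 0 r) p = 0"
        by (intro winding_number_zero_outside[of _ "cball 0 r"]) (use assms(3) in \<open>auto simp: convex_cball\<close>)
      then show ?thesis using False by simp
    qed
  qed simp
  also have "\<dots> = of_nat (\<Sum>p\<in>{p. poly P p = 0 \<and> norm p < r}. order p P)"
  proof -
    have "{p. poly P p = 0 \<and> norm p < r} = {p \<in> {p. poly P p = 0}. norm p < r}" by auto
    then show ?thesis using sum.inter_filter[OF finZ, of "\<lambda>p. of_nat (order p P) :: complex" "\<lambda>p. norm p < r"]
      by simp
  qed
  finally have L: "(\<Sum>p\<in>{p \<in> UNIV. poly P p = 0}. winding_number (circlepath 0 r) p * of_int (zorder (poly P) p))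
      = of_nat (\<Sum>p\<in>{p. poly P p = 0 \<and> norm p < r}. order p P)" .
  have Rr: "(\<Sum>p\<in>{p \<in> UNIV. F p = 0}. winding_number (circlepath 0 r) p * of_int (zorder F p)) = of_nat n"
  proof (cases "n = 0")
    case True then show ?thesis using ZF by simp
  next
    case False
    then have "{p \<in> UNIV. F p = 0} = {0}" using ZF by simp
    then show ?thesis using winding_number_circlepath_centre[OF assms(3), of 0]
      by (simp add: F_def zorder_monom[OF assms(2)])
  qed
  from R L Rr have "(of_nat (\<Sum>p\<in>{p. poly P p = 0 \<and> norm p < r}. order p P) :: complex) = of_nat n"
    by simp
  then show ?thesis using of_nat_eq_iff by blast
qed


lemma prod_norm_lt:
  fixes M :: "complex multiset"
  shows "(\<forall>x\<in>#M. norm x < r) \<Longrightarrow> M \<noteq> {#} \<Longrightarrow> norm (\<Prod>x\<in>#M. - x) < r ^ size M"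
proof (induction M)
  case empty then show ?case by simp
next
  case (add x M)
  show ?case
  proof (cases "M = {#}")
    case True then show ?thesis using add by simp
  next
    case False
    then have IH: "norm (\<Prod>x\<in>#M. - x) < r ^ size M" using add by simp
    have "norm x < r" using add by simp
    then have "norm x * norm (\<Prod>x\<in>#M. - x) < r * r ^ size M"
      using IH by (intro mult_strict_mono') auto
    then show ?thesis by (simp add: norm_mult)
  qed
qed

lemma outside_root:
  fixes Q :: "int poly" and A :: int
  assumes "degree Q \<ge> 1" "coeff Q 0 \<noteq> 0" "\<bar>lead_coeff Q\<bar> \<le> A"
  shows "\<exists>x::complex. poly (map_poly of_int Q) x = 0 \<and> norm x \<ge> 1 / A"
proof (rule ccontr)
  assume nx: "\<not> ?thesis"
  define R where "R = (map_poly of_int Q :: complex poly)"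
  have Q0: "Q \<noteq> 0" using assms(1) by auto
  then have lc: "lead_coeff Q \<noteq> 0" by simp
  then have A1: "A \<ge> 1" using assms(3) by linarith
  have dR: "degree R = degree Q" unfolding R_def by (rule degree_map_poly) simp
  have R0: "R \<noteq> 0" using dR assms(1) by auto
  have lcR: "lead_coeff R = of_int (lead_coeff Q)" using dR unfolding R_def by (simp add: coeff_map_poly)
  have all: "\<forall>x\<in>#proots R. norm x < 1 / A" using nx R0 by (auto simp: R_def not_le)
  have ne: "proots R \<noteq> {#}" using size_proots_complex[of R] dR assms(1) by auto
  have lt: "norm (\<Prod>x\<in>#proots R. - x) < (1 / A) ^ degree Q"
    using prod_norm_lt[OF all ne] size_proots_complex[of R] dR by simp
  have "(1 / real_of_int A) ^ degree Q \<le> (1 / A) ^ 1"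
    using A1 assms(1) by (intro power_decreasing) auto
  with lt have lt2: "norm (\<Prod>x\<in>#proots R. - x) < 1 / A" by simp
  have "poly R 0 = lead_coeff R * (\<Prod>x\<in>#proots R. - x)"
  proof -
    have "poly R 0 = poly (smult (lead_coeff R) (\<Prod>x\<in>#proots R. [:-x, 1:])) 0"
      by (simp add: complex_poly_decompose_multiset)
    also have "\<dots> = lead_coeff R * (\<Prod>x\<in>#proots R. - x)"
      by (simp add: poly_prod_mset)
    finally show ?thesis .
  qed
  then have "norm (poly R 0) = \<bar>real_of_int (lead_coeff Q)\<bar> * norm (\<Prod>x\<in>#proots R. - x)"
    by (simp add: lcR norm_mult)
  also have "\<dots> \<le> real_of_int A * norm (\<Prod>x\<in>#proots R. - x)"
    using assms(3) by (intro mult_right_mono) auto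
  also have "\<dots> < real_of_int A * (1 / A)"
    using lt2 A1 by (intro mult_strict_left_mono) auto
  also have "\<dots> = 1" using A1 by simp
  finally have "norm (poly R 0) < 1" .
  moreover have "poly R 0 = of_int (coeff Q 0)" by (simp add: R_def poly_0_coeff_0 coeff_map_poly)
  ultimately have "\<bar>real_of_int (coeff Q 0)\<bar> < 1" by simp
  then have "coeff Q 0 = 0" by linarith
  with assms(2) show False by simp
qed


lemma key_ineq:
  fixes f :: "int poly" and m :: nat and z :: complex
  assumes m2: "m \<ge> 2" and df: "degree f = m" and a0: "coeff f m \<noteq> 0"
    and hyp: "\<bar>coeff f (m - 1)\<bar> >
           1 + (\<Sum>k = 0..m - 2. \<bar>coeff f k\<bar> * \<bar>coeff f m\<bar> ^ (m - 1 - k))"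
    and nz: "norm z = 1 / real_of_int \<bar>coeff f m\<bar>"
  shows "norm (poly (map_poly of_int f) z - of_int (coeff f (m - 1)) * z ^ (m - 1))
         < norm (of_int (coeff f (m - 1)) * z ^ (m - 1))"
proof -
  define A where "A = real_of_int \<bar>coeff f m\<bar>"
  define r where "r = 1 / A"
  have A1: "A \<ge> 1" using a0 unfolding A_def by linarith
  have rA: "r * A = 1" using A1 unfolding r_def by simp
  have r0: "r > 0" using A1 unfolding r_def by simp
  have nz': "norm z = r" using nz unfolding r_def A_def .
  have dP: "degree (map_poly (of_int :: int \<Rightarrow> complex) f) = m"
    using df by (subst degree_map_poly) auto
  have set: "{..m} = insert m (insert (m - 1) {0..m - 2})" using m2 by auto
  have poly_eq: "poly (map_poly of_int f) z =
      of_int (coeff f m) * z ^ m + of_int (coeff f (m - 1)) * z ^ (m - 1)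
      + (\<Sum>i = 0..m - 2. of_int (coeff f i) * z ^ i)"
  proof -
    have n1: "m \<notin> insert (m - 1) {0..m - 2}" "m - 1 \<notin> {0..m - 2}" using m2 by auto
    have "poly (map_poly of_int f) z = (\<Sum>i\<in>insert m (insert (m - 1) {0..m - 2}). of_int (coeff f i) * z ^ i)"
      by (simp only: poly_altdef dP set) (simp add: coeff_map_poly)
    also have "\<dots> = of_int (coeff f m) * z ^ m + (of_int (coeff f (m - 1)) * z ^ (m - 1)
      + (\<Sum>i = 0..m - 2. of_int (coeff f i) * z ^ i))"
      by (subst sum.insert, simp, rule n1(1), subst sum.insert, simp, rule n1(2), rule refl)
    finally show ?thesis by (simp add: add.assoc)
  qed
  have "norm (poly (map_poly of_int f) z - of_int (coeff f (m - 1)) * z ^ (m - 1))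
      = norm (of_int (coeff f m) * z ^ m + (\<Sum>i = 0..m - 2. of_int (coeff f i) * z ^ i))"
    by (simp add: poly_eq)
  also have "\<dots> \<le> norm (of_int (coeff f m) * z ^ m) + norm (\<Sum>i = 0..m - 2. of_int (coeff f i) * z ^ i)"
    by (rule norm_triangle_ineq)
  also have "\<dots> \<le> A * r ^ m + (\<Sum>i = 0..m - 2. \<bar>real_of_int (coeff f i)\<bar> * r ^ i)"
  proof (rule add_mono)
    show "norm (of_int (coeff f m) * z ^ m) \<le> A * r ^ m"
      by (simp add: norm_mult norm_power nz' A_def)
    have "norm (\<Sum>i = 0..m - 2. of_int (coeff f i) * z ^ i) \<le> (\<Sum>i = 0..m - 2. norm (of_int (coeff f i) * z ^ i))"
      by (rule norm_sum)
    also have "\<dots> = (\<Sum>i = 0..m - 2. \<bar>real_of_int (coeff f i)\<bar> * r ^ i)"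
      by (simp add: norm_mult norm_power nz')
    finally show "norm (\<Sum>i = 0..m - 2. of_int (coeff f i) * z ^ i) \<le> (\<Sum>i = 0..m - 2. \<bar>real_of_int (coeff f i)\<bar> * r ^ i)" .
  qed
  also have "\<dots> < \<bar>real_of_int (coeff f (m - 1))\<bar> * r ^ (m - 1)"
  proof -
    define T where "T = A ^ (m - 1)"
    have T0: "T > 0" using A1 unfolding T_def by simp
    have pw: "r ^ i * T = A ^ (m - 1 - i)" if "i \<le> m - 1" for i
    proof -
      have mi: "m - 1 = i + (m - 1 - i)" using that by simp
      have "T = A ^ i * A ^ (m - 1 - i)" unfolding T_def power_add[symmetric] by (subst mi) (rule refl)
      then have "r ^ i * T = (r * A) ^ i * A ^ (m - 1 - i)" by (simp add: power_mult_distrib)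
      then show ?thesis using rA by simp
    qed
    have e1: "A * r ^ m * T = 1"
    proof -
      have "A * r ^ m * T = (r * A) * (r ^ (m - 1) * T)" using m2
        by (cases m) (auto simp: algebra_simps)
      also have "\<dots> = 1" using pw[of "m - 1"] rA by simp
      finally show ?thesis .
    qed
    have e2: "(\<Sum>i = 0..m - 2. \<bar>real_of_int (coeff f i)\<bar> * r ^ i) * T
        = (\<Sum>i = 0..m - 2. \<bar>real_of_int (coeff f i)\<bar> * A ^ (m - 1 - i))"
      unfolding sum_distrib_right
      by (rule sum.cong) (use pw in \<open>auto simp: mult.assoc\<close>)
    have e3: "\<bar>real_of_int (coeff f (m - 1))\<bar> * r ^ (m - 1) * T = \<bar>real_of_int (coeff f (m - 1))\<bar>"
      using pw[of "m - 1"] by (simp add: mult.assoc)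
    have h: "real_of_int \<bar>coeff f (m - 1)\<bar> >
           1 + (\<Sum>k = 0..m - 2. real_of_int \<bar>coeff f k\<bar> * A ^ (m - 1 - k))"
    proof -
      have "real_of_int (1 + (\<Sum>k = 0..m - 2. \<bar>coeff f k\<bar> * \<bar>coeff f m\<bar> ^ (m - 1 - k))) < real_of_int \<bar>coeff f (m - 1)\<bar>"
        using hyp by (simp only: of_int_less_iff)
      then show ?thesis by (simp add: A_def)
    qed
    have "(A * r ^ m + (\<Sum>i = 0..m - 2. \<bar>real_of_int (coeff f i)\<bar> * r ^ i)) * T
         < \<bar>real_of_int (coeff f (m - 1))\<bar> * r ^ (m - 1) * T"
    proof -
      have e3': "r ^ (m - 1) * T = 1" using pw[of "m - 1"] by simp
      have "(A * r ^ m + (\<Sum>i = 0..m - 2. \<bar>real_of_int (coeff f i)\<bar> * r ^ i)) * T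
          = 1 + (\<Sum>i = 0..m - 2. \<bar>real_of_int (coeff f i)\<bar> * A ^ (m - 1 - i))"
        by (simp only: distrib_right e1 e2)
      also have "\<dots> < \<bar>real_of_int (coeff f (m - 1))\<bar>" using h by simp
      also have "\<dots> = \<bar>real_of_int (coeff f (m - 1))\<bar> * r ^ (m - 1) * T"
        by (simp only: mult.assoc e3' mult_1_right)
      finally show ?thesis .
    qed
    then show ?thesis using T0 by simp
  qed
  also have "\<dots> = norm (of_int (coeff f (m - 1)) * z ^ (m - 1))"
    by (simp add: norm_mult norm_power nz')
  finally show ?thesis .
qed


theorem theoremB:
  fixes f :: "int poly" and m :: nat
  assumes "m \<ge> 2"
    and "degree f = m"
    and "content f = 1"
    and "coeff f 0 * coeff f m \<noteq> 0"
    and "\<bar>coeff f (m - 1)\<bar> >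
           1 + (\<Sum>k = 0..m - 2. \<bar>coeff f k\<bar> * \<bar>coeff f m\<bar> ^ (m - 1 - k))"
  shows "irreducible f"
proof -
  note m2 = assms(1) and df = assms(2) and cf = assms(3) and hyp = assms(5)
  have c0: "coeff f 0 \<noteq> 0" and a0: "coeff f m \<noteq> 0" using assms(4) by auto
  define A where "A = \<bar>coeff f m\<bar>"
  have A1: "A \<ge> 1" using a0 unfolding A_def by linarith
  define r where "r = 1 / real_of_int A"
  have r0: "r > 0" using A1 unfolding r_def by simp
  define P where "P = (map_poly of_int f :: complex poly)"
  have f0: "f \<noteq> 0" using df m2 by auto
  have dP: "degree P = m" unfolding P_def using df by (subst degree_map_poly) auto
  have P0: "P \<noteq> 0" using dP m2 by auto
  have b0: "coeff f (m - 1) \<noteq> 0"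
  proof
    assume "coeff f (m - 1) = 0"
    moreover have "(\<Sum>k = 0..m - 2. \<bar>coeff f k\<bar> * \<bar>coeff f m\<bar> ^ (m - 1 - k)) \<ge> 0"
      by (intro sum_nonneg) auto
    ultimately show False using hyp by linarith
  qed
  have inside: "(\<Sum>p\<in>{p. poly P p = 0 \<and> norm p < r}. order p P) = m - 1"
  proof (rule count_inside[OF P0 _ r0])
    show "of_int (coeff f (m - 1)) \<noteq> (0::complex)" using b0 by simp
    fix z :: complex assume "norm z = r"
    then show "norm (poly P z - of_int (coeff f (m - 1)) * z ^ (m - 1)) < norm (of_int (coeff f (m - 1)) * z ^ (m - 1))"
      unfolding P_def by (intro key_ineq[OF m2 df a0 hyp]) (simp add: r_def A_def)
  qed
  define Z where "Z = {p. poly P p = 0}"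
  have finZ: "finite Z" unfolding Z_def using poly_roots_finite[OF P0] .
  have total: "(\<Sum>p\<in>Z. order p P) = m"
  proof -
    have "size (proots P) = m" using size_proots_complex[of P] dP by simp
    moreover have "size (proots P) = (\<Sum>p\<in>Z. order p P)"
      unfolding size_multiset_overloaded_eq Z_def using P0 by simp
    ultimately show ?thesis by simp
  qed
  define Out where "Out = Z - {p. poly P p = 0 \<and> norm p < r}"
  have outside: "(\<Sum>p\<in>Out. order p P) = 1"
  proof -
    have sub: "{p. poly P p = 0 \<and> norm p < r} \<subseteq> Z" unfolding Z_def by auto
    have "(\<Sum>p\<in>Z. order p P) = (\<Sum>p\<in>Out. order p P) + (\<Sum>p\<in>{p. poly P p = 0 \<and> norm p < r}. order p P)"
      unfolding Out_def using sum.subset_diff[OF sub finZ] by simp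
    then show ?thesis using total inside m2 by simp
  qed
  show ?thesis
  proof (rule irreducibleI)
    show "f \<noteq> 0" by fact
    show "\<not> f dvd 1" using df m2 by (auto simp: is_unit_poly_iff)
    fix g h assume fgh: "f = g * h"
    show "g dvd 1 \<or> h dvd 1"
    proof (rule ccontr)
      assume nu: "\<not> (g dvd 1 \<or> h dvd 1)"
      have g0: "g \<noteq> 0" and h0: "h \<noteq> 0" using f0 fgh by auto
      have "content g * content h = 1" using cf fgh by (simp add: content_mult)
      then have "content g dvd 1" "content h dvd 1" by (metis dvd_triv_left, metis dvd_triv_right)
      then have cg: "content g = 1" and ch: "content h = 1"
        by (metis is_unit_normalize normalize_content)+
      have deg1: "degree q \<ge> 1" if "content q = 1" "\<not> q dvd 1" for q :: "int poly"
      proof (rule ccontr)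
        assume "\<not> degree q \<ge> 1"
        then have "degree q = 0" by simp
        then obtain c where qc: "q = [:c:]" by (metis degree_eq_zeroE)
        then have "normalize c = 1" using that(1) by (simp add: content_const)
        then have "c dvd 1" by (metis dvd_normalize_iff dvd_refl)
        then show False using that(2) qc by (auto simp: is_unit_poly_iff)
      qed
      have dg: "degree g \<ge> 1" using deg1[OF cg] nu by auto
      have dh: "degree h \<ge> 1" using deg1[OF ch] nu by auto
      have cg0: "coeff g 0 \<noteq> 0" and ch0: "coeff h 0 \<noteq> 0"
        using c0 fgh by (auto simp: coeff_mult_0)
      have lf: "lead_coeff f = coeff f m" using df by simp
      have lfm: "coeff f m = lead_coeff g * lead_coeff h" using lf fgh by (simp add: lead_coeff_mult)
      have lg: "\<bar>lead_coeff g\<bar> \<le> A"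
      proof -
        have "\<bar>lead_coeff h\<bar> \<ge> 1" using h0 by (simp add: int_one_le_iff_zero_less)
        then have "\<bar>lead_coeff g\<bar> * 1 \<le> \<bar>lead_coeff g\<bar> * \<bar>lead_coeff h\<bar>"
          by (intro mult_left_mono) auto
        then show ?thesis unfolding A_def lfm by (simp add: abs_mult)
      qed
      have lh: "\<bar>lead_coeff h\<bar> \<le> A"
      proof -
        have "\<bar>lead_coeff g\<bar> \<ge> 1" using g0 by (simp add: int_one_le_iff_zero_less)
        then have "\<bar>lead_coeff h\<bar> * 1 \<le> \<bar>lead_coeff h\<bar> * \<bar>lead_coeff g\<bar>"
          by (intro mult_left_mono) auto
        then show ?thesis unfolding A_def lfm by (simp add: abs_mult mult.commute)
      qed
      define G where "G = (map_poly of_int g :: complex poly)"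
      define H where "H = (map_poly of_int h :: complex poly)"
      have PGH: "P = G * H" unfolding P_def G_def H_def fgh by (rule map_poly_of_int_mult)
      have G0: "G \<noteq> 0" and H0: "H \<noteq> 0" using P0 PGH by auto
      obtain x1 where x1: "poly G x1 = 0" "norm x1 \<ge> r"
        using outside_root[OF dg cg0 lg] unfolding G_def r_def by blast
      obtain x2 where x2: "poly H x2 = 0" "norm x2 \<ge> r"
        using outside_root[OF dh ch0 lh] unfolding H_def r_def by blast
      have x1Out: "x1 \<in> Out" using x1 unfolding Out_def Z_def PGH by auto
      have x2Out: "x2 \<in> Out" using x2 unfolding Out_def Z_def PGH by auto
      have finOut: "finite Out" unfolding Out_def using finZ by simp
      have "(\<Sum>p\<in>Out. order p P) = (\<Sum>p\<in>Out. order p G) + (\<Sum>p\<in>Out. order p H)"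
        unfolding PGH using P0 PGH by (simp add: order_mult sum.distrib)
      moreover have "order x1 G \<le> (\<Sum>p\<in>Out. order p G)"
        by (rule member_le_sum) (use x1Out finOut in auto)
      moreover have "order x2 H \<le> (\<Sum>p\<in>Out. order p H)"
        by (rule member_le_sum) (use x2Out finOut in auto)
      moreover have "order x1 G \<ge> 1" using x1(1) G0 order_root[of G x1] by simp
      moreover have "order x2 H \<ge> 1" using x2(1) H0 order_root[of H x2] by simp
      ultimately show False using outside by simp
    qed
  qed
qed

end
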